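(* Let $A\in M_n(\mathbb{Z})$ induce an ergodic endomorphism of $\mathbb{T}^n$, and let $p$ be an odd prime with $\gcd(p,\det A)=1$. Let $\{u_m\}_{m\ge0}$ be the linear recurrence sequence induced by $A$ and, for $r\ge1$, let $T_r$ be the (minimal) period of the sequence $\{u_m \bmod p^r\}_{m\ge 0}$. Then there is $t\in\mathbb{N}$ such that $T_1=T_2=\cdots=T_t$ and $T_k=p^{k-t}T_1$ for every $k>t$.
   Context: Write $f(x)=\det(xI-A)=x^n-c_{n-1}x^{n-1}-\cdots-c_1x-c_0$. The linear recurrence sequence induced by $A$ is the integer sequence defined by $u_0=u_1=\cdots=u_{n-2}=0$, $u_{n-1}=1$, and $u_{m+n}=c_{n-1}u_{m+n-1}+\cdots+c_1u_{m+1}+c_0u_m$ for $m\ge 0$. When $\gcd(p,\det A)=1$, the sequence $\{u_m\bmod p^r\}$ is purely periodic. The endomorphism $x\mapsto Ax\bmod 1$ of $\mathbb{T}^n=\mathbb{R}^n/\mathbb{Z}^n$ is ergodic if it is ergodic with respect to Lebesgue measure (equivalently, $\det A\neq0$ and no eigenvalue of $A$ is a root of unity). *)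

theory Defs
  imports "Jordan_Normal_Form.Char_Poly"
begin

text \<open>Ergodicity of the toral endomorphism induced by an integer n x n matrix A,
  in the equivalent algebraic form given in the paper's context:
  det A is nonzero and no (complex) eigenvalue of A is a root of unity.\<close>
definition ergodic_toral :: "int mat \<Rightarrow> bool" where
  "ergodic_toral A \<longleftrightarrow> det A \<noteq> 0 \<and>
     (\<forall>z::complex. eigenvalue (map_mat of_int A) z \<longrightarrow> \<not> (\<exists>k>0. z ^ k = 1))"

function lrs :: "(nat \<Rightarrow> int) \<Rightarrow> nat \<Rightarrow> nat \<Rightarrow> int" where
  "lrs c n m = (if m + 1 < n then 0 else if m + 1 = n then 1
               else (\<Sum>i<n. c i * lrs c n (m - n + i)))"
  by pat_completeness auto
termination
  by (relation "measure (\<lambda>(c, n, m). m)") auto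

text \<open>The linear recurrence sequence induced by A (with A n x n):
  f(x) = det(xI - A) = x^n - c_{n-1} x^{n-1} - ... - c_0, so c_i = - coeff f i.\<close>
definition induced_lrs :: "int mat \<Rightarrow> nat \<Rightarrow> int" where
  "induced_lrs A = lrs (\<lambda>i. - coeff (char_poly A) i) (dim_row A)"

definition min_period_mod :: "(nat \<Rightarrow> int) \<Rightarrow> int \<Rightarrow> nat" where
  "min_period_mod u q = (LEAST T. T > 0 \<and> (\<forall>m. u (m + T) mod q = u m mod q))"

end

theory Submission
  imports Defs
begin
declare lrs.simps[simp del]

definition recs :: "(nat \<Rightarrow> int) \<Rightarrow> nat \<Rightarrow> (nat \<Rightarrow> 'a::comm_ring_1) \<Rightarrow> bool" where
  "recs c n s \<longleftrightarrow> (\<forall>m. s (m + n) = (\<Sum>i<n. of_int (c i) * s (m + i)))"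

lemma recs_dvd:
  assumes "recs c n s" "\<forall>j<n. q dvd s j"
  shows "q dvd s m"
proof (induction m rule: less_induct)
  case (less m)
  show ?case
  proof (cases "m < n")
    case True thus ?thesis using assms(2) by auto
  next
    case False
    then obtain k where k: "m = k + n" by (metis add.commute le_add_diff_inverse not_less)
    have "s m = (\<Sum>i<n. of_int (c i) * s (k + i))" using assms(1) k unfolding recs_def by auto
    moreover have "q dvd (\<Sum>i<n. of_int (c i) * s (k + i))"
    proof (rule dvd_sum)
      fix i assume "i \<in> {..<n}"
      hence "k + i < m" using k by auto
      thus "q dvd of_int (c i) * s (k + i)" using less by auto
    qed
    ultimately show ?thesis by simp
  qed
qed

lemma recs_shift: "recs c n s \<Longrightarrow> recs c n (\<lambda>m. s (m + k))"
  unfolding recs_def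
proof
  fix m assume "\<forall>m. s (m + n) = (\<Sum>i<n. of_int (c i) * s (m + i))"
  from this[rule_format, of "m+k"] show "s (m + n + k) = (\<Sum>i<n. of_int (c i) * s (m + i + k))"
    by (simp add: ac_simps)
qed

lemma recs_diff: "recs c n s \<Longrightarrow> recs c n t \<Longrightarrow> recs c n (\<lambda>m. s m - t m)"
  unfolding recs_def by (simp add: right_diff_distrib sum_subtractf)

lemma recs_smult: "recs c n s \<Longrightarrow> recs c n (\<lambda>m. a * s m)"
  unfolding recs_def by (simp add: sum_distrib_left ac_simps)

lemma recs_of_int: "recs c n (s :: nat \<Rightarrow> int) \<Longrightarrow> recs c n (\<lambda>m. (of_int (s m) :: 'a::comm_ring_1))"
  unfolding recs_def by (simp add: of_int_sum[symmetric])

lemma recs_L: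
  assumes v: "recs c n v" and n: "n \<ge> 1" and v0: "\<forall>j<n-1. v j = 0" and v1: "v (n-1) = 1"
    and per: "\<forall>m. q dvd v (m + T) - v m"
    and s: "recs c n (s :: nat \<Rightarrow> 'a::comm_ring_1)"
  shows "q dvd s (m + T) - s m"
proof -
  have main: "\<forall>z s. n - z = d \<longrightarrow> z \<le> n \<longrightarrow> recs c n s \<longrightarrow> (\<forall>j<z. s j = (0::'a)) \<longrightarrow>
        (\<forall>m. q dvd s (m + T) - s m)" for d
  proof (induction d)
    case 0
    show ?case
    proof (intro allI impI)
      fix z and s :: "nat \<Rightarrow> 'a" and m
      assume "n - z = 0" "z \<le> n" "recs c n s" "\<forall>j<z. s j = 0"
      hence "\<forall>j<n. (0::'a) dvd s j" by auto
      hence "\<And>m. (0::'a) dvd s m" using recs_dvd[OF \<open>recs c n s\<close>] by blast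
      thus "q dvd s (m + T) - s m" by simp
    qed
  next
    case (Suc d)
    show ?case
    proof (intro allI impI)
      fix z and s :: "nat \<Rightarrow> 'a" and m
      assume a: "n - z = Suc d" "z \<le> n" "recs c n s" "\<forall>j<z. s j = 0"
      define k where "k = n - 1 - z"
      define s' where "s' = (\<lambda>m. s m - s z * v (m + k))"
      have rs': "recs c n s'" unfolding s'_def
        by (rule recs_diff[OF a(3) recs_smult[OF recs_shift[OF v]]])
      have z0: "\<forall>j<Suc z. s' j = 0"
      proof (intro allI impI)
        fix j assume "j < Suc z"
        show "s' j = 0"
        proof (cases "j < z")
          case True
          hence "j + k < n - 1" using a(1) unfolding k_def by auto
          thus ?thesis using v0 a(4) True unfolding s'_def by auto
        next
          case False
          hence "j = z" using \<open>j < Suc z\<close> by auto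
          moreover have "z + k = n - 1" using a(1) unfolding k_def by auto
          ultimately show ?thesis using v1 unfolding s'_def by auto
        qed
      qed
      have "n - Suc z = d" "Suc z \<le> n" using a(1) by auto
      hence h1: "q dvd s' (m + T) - s' m" using Suc.IH rs' z0 by blast
      have h2: "q dvd v (m + k + T) - v (m + k)" using per by auto
      have "s (m + T) - s m = (s' (m + T) - s' m) + s z * (v (m + k + T) - v (m + k))"
        unfolding s'_def by (simp add: algebra_simps)
      thus "q dvd s (m + T) - s m" using h1 h2 by simp
    qed
  qed
  show ?thesis using main[of n, rule_format, of 0 s] s by auto
qed


definition per :: "(nat \<Rightarrow> int) \<Rightarrow> int \<Rightarrow> nat \<Rightarrow> bool" where
  "per u q T \<longleftrightarrow> (\<forall>m. q dvd u (m + T) - u m)"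

lemma recs_div:
  assumes "recs c n (s::nat\<Rightarrow>int)" "d \<noteq> 0" "\<forall>m. d dvd s m"
  shows "recs c n (\<lambda>m. s m div d)"
  unfolding recs_def
proof
  fix m
  have e: "\<And>i. c i * s (m + i) = d * (c i * (s (m + i) div d))" using assms(3)
    by (metis dvd_mult_div_cancel mult.left_commute)
  have "d * (s (m + n) div d) = s (m + n)" using assms(3) by simp
  also have "\<dots> = (\<Sum>i<n. c i * s (m + i))" using assms(1)[unfolded recs_def, rule_format, of m] by simp
  also have "\<dots> = d * (\<Sum>i<n. c i * (s (m + i) div d))"
    unfolding sum_distrib_left by (rule sum.cong[OF refl], rule e)
  finally have "d * (s (m + n) div d) = d * (\<Sum>i<n. c i * (s (m + i) div d))" .
  thus "s (m + n) div d = (\<Sum>i<n. of_int (c i) * (s (m + i) div d))" using assms(2) by simp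
qed

lemma per_val:
  assumes v: "recs c n u" and n: "n \<ge> 1" and v0: "\<forall>j<n-1. u j = 0" and v1: "u (n-1) = 1"
    and p: "per u q T" and s: "recs c n s" and d: "\<forall>m. d dvd s m"
  shows "d * q dvd s (m + T) - s m"
proof (cases "d = 0")
  case True thus ?thesis using d by simp
next
  case False
  have r: "recs c n (\<lambda>m. s m div d)" using recs_div[OF s False d] .
  have "q dvd (s (m + T) div d) - (s m div d)"
    using recs_L[OF v n v0 v1 p[unfolded per_def] r] by simp
  moreover have "s (m + T) - s m = d * ((s (m + T) div d) - (s m div d))"
    using d by (simp add: right_diff_distrib)
  ultimately show ?thesis by simp
qed

lemma per_sub: "per u q T \<Longrightarrow> per u q T' \<Longrightarrow> T' \<le> T \<Longrightarrow> per u q (T - T')"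
  unfolding per_def
proof
  fix m assume a: "\<forall>m. q dvd u (m + T) - u m" "\<forall>m. q dvd u (m + T') - u m" "T' \<le> T"
  have "q dvd u (m + (T - T') + T') - u (m + (T - T'))" using a(2) by blast
  moreover have "m + (T - T') + T' = m + T" using a(3) by simp
  ultimately have "q dvd u (m + T) - u (m + (T - T'))" by simp
  with a(1) have "q dvd (u (m + T) - u m) - (u (m + T) - u (m + (T - T')))"
    using dvd_diff by blast
  thus "q dvd u (m + (T - T')) - u m" by simp
qed

lemma per_add: "per u q T \<Longrightarrow> per u q T' \<Longrightarrow> per u q (T + T')"
  unfolding per_def
proof
  fix m assume a: "\<forall>m. q dvd u (m + T) - u m" "\<forall>m. q dvd u (m + T') - u m"
  have "q dvd u (m + T' + T) - u (m + T')" "q dvd u (m + T') - u m" using a by blast+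
  hence "q dvd (u (m + T' + T) - u (m + T')) + (u (m + T') - u m)" using dvd_add by blast
  thus "q dvd u (m + (T + T')) - u m" by (simp add: ac_simps)
qed

lemma per_0: "per u q 0" unfolding per_def by simp

lemma per_mult: "per u q T \<Longrightarrow> per u q (k * T)"
  by (induction k) (auto simp: per_0 per_add)

lemma per_dvd: "per u q T \<Longrightarrow> q' dvd q \<Longrightarrow> per u q' T"
  unfolding per_def using dvd_trans by blast

lemma per_mod: assumes "per u q T" "per u q P" "P > 0" shows "per u q (T mod P)"
proof -
  have "per u q ((T div P) * P)" using per_mult assms(2) by blast
  moreover have "T mod P = T - (T div P) * P" by (simp add: minus_div_mult_eq_mod)
  moreover have "(T div P) * P \<le> T" using div_mult_mod_eq[of T P] by linarith
  ultimately show ?thesis using per_sub[OF assms(1)] by metis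
qed

lemma min_period_eq: "min_period_mod u q = (LEAST T. T > 0 \<and> per u q T)"
  unfolding min_period_mod_def per_def by (simp add: mod_eq_dvd_iff)

lemma min_period_props:
  assumes "\<exists>T>0. per u q T"
  shows "min_period_mod u q > 0" "per u q (min_period_mod u q)"
    "\<And>T. per u q T \<Longrightarrow> T > 0 \<Longrightarrow> min_period_mod u q \<le> T"
    "\<And>T. per u q T \<Longrightarrow> min_period_mod u q dvd T"
proof -
  let ?P = "min_period_mod u q"
  have l: "?P > 0 \<and> per u q ?P" unfolding min_period_eq using LeastI_ex[OF assms] .
  thus "?P > 0" "per u q ?P" by auto
  show le: "\<And>T. per u q T \<Longrightarrow> T > 0 \<Longrightarrow> ?P \<le> T" unfolding min_period_eq
    by (simp add: Least_le)
  fix T assume "per u q T"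
  hence "per u q (T mod ?P)" using per_mod l by blast
  moreover have "T mod ?P < ?P" using l by auto
  ultimately have "T mod ?P = 0" using le by (meson leD neq0_conv)
  thus "?P dvd T" by auto
qed


lemma descent:
  assumes r: "recs c n u" and n: "n \<ge> 1" and cp: "coprime (c 0) q"
    and h: "\<forall>m. q dvd u (m + Suc i + T) - u (m + Suc i)"
  shows "\<forall>m. q dvd u (m + i + T) - u (m + i)"
proof
  fix m
  define x where "x = m + i"
  define df where "df = (\<lambda>y. u (y + T) - u y)"
  obtain n' where n': "n = Suc n'" using n by (cases n) auto
  have "df (x + n) = (\<Sum>l<n. c l * df (x + l))"
    using r[unfolded recs_def, rule_format, of x] r[unfolded recs_def, rule_format, of "x+T"]
    unfolding df_def by (simp add: right_diff_distrib sum_subtractf ac_simps)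
  also have "\<dots> = c 0 * df x + (\<Sum>l<n'. c (Suc l) * df (x + Suc l))"
    unfolding n' sum.lessThan_Suc_shift by simp
  finally have eq: "c 0 * df x = df (x + n) - (\<Sum>l<n'. c (Suc l) * df (x + Suc l))" by simp
  have "q dvd df (x + n)" using h[rule_format, of "m + n'"] unfolding df_def x_def n' by (simp add: ac_simps)
  moreover have "q dvd (\<Sum>l<n'. c (Suc l) * df (x + Suc l))"
  proof (rule dvd_sum)
    fix l assume "l \<in> {..<n'}"
    have "q dvd df (x + Suc l)" using h[rule_format, of "m + l"] unfolding df_def x_def by (simp add: ac_simps)
    thus "q dvd c (Suc l) * df (x + Suc l)" by simp
  qed
  ultimately have "q dvd c 0 * df x" unfolding eq by simp
  hence "q dvd df x" using cp by (metis coprime_commute coprime_dvd_mult_right_iff)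
  thus "q dvd u (m + i + T) - u (m + i)" unfolding df_def x_def .
qed

lemma descent_all:
  assumes r: "recs c n u" and n: "n \<ge> 1" and cp: "coprime (c 0) q"
    and h: "\<forall>m. q dvd u (m + i + T) - u (m + i)"
  shows "per u q T"
proof -
  have "\<forall>m. q dvd u (m + (i - k) + T) - u (m + (i - k))" for k
  proof (induction k)
    case 0 thus ?case using h by simp
  next
    case (Suc k)
    show ?case
    proof (cases "k < i")
      case True
      hence "i - k = Suc (i - Suc k)" by simp
      thus ?thesis using descent[OF r n cp, of "i - Suc k" T] Suc.IH by simp
    next
      case False thus ?thesis using Suc.IH by simp
    qed
  qed
  from this[of i] show ?thesis unfolding per_def by simp
qed

lemma per_exists:
  assumes r: "recs c n u" and n: "n \<ge> 1" and cp: "coprime (c 0) q" and q: "q > 0"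
  shows "\<exists>T>0. per u q T"
proof -
  define f where "f = (\<lambda>m. map (\<lambda>l. u (m + l) mod q) [0..<n])"
  have sub: "range f \<subseteq> {xs. set xs \<subseteq> {0..<q} \<and> length xs = n}"
    unfolding f_def using q by auto
  have fin: "finite {xs. set xs \<subseteq> {0..<q} \<and> length xs = n}"
    by (rule finite_lists_length_eq) simp
  have "\<not> inj f"
  proof
    assume "inj f"
    hence "finite (UNIV :: nat set)" using finite_subset[OF sub fin] finite_imageD by blast
    thus False by simp
  qed
  then obtain i j where ij: "i \<noteq> j" "f i = f j" unfolding inj_def by blast
  obtain a b where ab: "a < b" "f a = f b"
  proof (cases "i < j")
    case True thus ?thesis using ij that by blast
  next
    case False thus ?thesis using ij that[of j i] by auto
  qed
  define T where "T = b - a"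
  have "\<forall>l<n. q dvd u (l + b) - u (l + a)"
  proof (intro allI impI)
    fix l assume "l < n"
    hence "f a ! l = f b ! l" using ab by simp
    hence "u (a + l) mod q = u (b + l) mod q" unfolding f_def using \<open>l < n\<close> by simp
    thus "q dvd u (l + b) - u (l + a)" by (simp add: mod_eq_dvd_iff ac_simps)
  qed
  hence "\<forall>l<n. q dvd (\<lambda>m. u (m + b) - u (m + a)) l" by simp
  hence "\<And>m. q dvd u (m + b) - u (m + a)"
    using recs_dvd[OF recs_diff[OF recs_shift[OF r] recs_shift[OF r]]] by blast
  hence "\<forall>m. q dvd u (m + a + T) - u (m + a)" unfolding T_def using ab(1)
    by (simp add: ac_simps)
  hence "per u q T" using descent_all[OF r n cp] by blast
  moreover have "T > 0" using ab unfolding T_def by simp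
  ultimately show ?thesis by blast
qed

lemma gsum: "2 * (\<Sum>j<k. j) = k * (k - 1::nat)"
  by (induction k) (auto simp: algebra_simps)

lemma lift_main:
  assumes r: "recs c n u" and n: "n \<ge> 1" and v0: "\<forall>j<n-1. u j = 0" and v1: "u (n-1) = 1"
    and pr: "per u (int p ^ s) T" and s: "s \<ge> 1" and p: "prime p" "odd p"
  shows "int p ^ (s+2) dvd (u (m + p*T) - u m) - int p * (u (m+T) - u m)"
proof -
  define q where "q = int p ^ s"
  define e where "e = (\<lambda>m. u (m + T) - u m)"
  define E where "E = (\<lambda>x::nat\<Rightarrow>int. \<lambda>m. x (m + T) - x m)"
  have pq: "per u q T" using pr unfolding q_def .
  have re: "recs c n e" unfolding e_def by (rule recs_diff[OF recs_shift[OF r] r])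
  have de: "\<forall>m. q dvd e m" using pq unfolding per_def e_def by auto
  have RE: "recs c n x \<Longrightarrow> recs c n (E x)" for x unfolding E_def
    by (rule recs_diff[OF recs_shift]) 
  have VE: "recs c n x \<Longrightarrow> \<forall>m. d dvd x m \<Longrightarrow> \<forall>m. d * q dvd E x m" for x d
    unfolding E_def using per_val[OF r n v0 v1 pq] by blast
  have R: "recs c n x \<Longrightarrow> \<forall>m. d dvd x m \<Longrightarrow>
     \<forall>m. d * q * q dvd x (m + j * T) - x m - of_nat j * (x (m + T) - x m)" for x d j
  proof (induction j)
    case 0 thus ?case by simp
  next
    case (Suc j)
    show ?case
    proof
      fix m
      have ih: "d * q * q dvd x (m + T + j * T) - x (m + T) - of_nat j * (x (m + T + T) - x (m + T))"
        using Suc by blast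
      have "\<forall>m. d * q * q dvd E (E x) m" using VE[OF RE[OF Suc.prems(1)] VE[OF Suc.prems]] .
      moreover have "E (E x) m = (x (m + T + T) - x (m + T)) - (x (m + T) - x m)"
        unfolding E_def by (simp add: ac_simps)
      ultimately have h2: "d * q * q dvd (x (m + T + T) - x (m + T)) - (x (m + T) - x m)"
        by metis
      have "x (m + Suc j * T) - x m - of_nat (Suc j) * (x (m + T) - x m) =
        (x (m + T + j * T) - x (m + T) - of_nat j * (x (m + T + T) - x (m + T)))
        + of_nat j * ((x (m + T + T) - x (m + T)) - (x (m + T) - x m))"
        by (simp add: algebra_simps)
      thus "d * q * q dvd x (m + Suc j * T) - x m - of_nat (Suc j) * (x (m + T) - x m)"
        using ih h2 by simp
    qed
  qed
  have R': "q * q * q dvd e (m + j * T) - e m - of_nat j * E e m" for j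
    using R[OF re de] unfolding E_def by blast
  have EE: "q * q dvd E e m" using VE[OF re de] by blast
  have tel: "u (m + p * T) - u m = (\<Sum>j<p. e (m + j * T))"
    using sum_lessThan_telescope[of "\<lambda>i. u (m + i * T)" p] unfolding e_def
    by (simp add: ac_simps)
  obtain a where a: "p = 2 * a + 1" using p(2) oddE by blast
  have gs: "(\<Sum>j<p. j) = p * a" using gsum[of p] a by simp
  have gsi: "(\<Sum>j<p. (of_nat j :: int)) = int p * int a" using arg_cong[OF gs, of int]
    by (simp add: of_nat_sum)
  have "(u (m + p*T) - u m) - int p * (u (m+T) - u m) =
     (\<Sum>j<p. e (m + j * T) - e m - of_nat j * E e m) + (\<Sum>j<p. (of_nat j :: int)) * E e m"
    unfolding tel sum_subtractf sum_distrib_right e_def[symmetric] by (simp add: e_def)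
  also have "\<dots> = (\<Sum>j<p. e (m + j * T) - e m - of_nat j * E e m) + int a * (int p * E e m)"
    unfolding gsi by simp
  finally have eq: "(u (m + p*T) - u m) - int p * (u (m+T) - u m) =
     (\<Sum>j<p. e (m + j * T) - e m - of_nat j * E e m) + int a * (int p * E e m)" .
  have e3: "s + s + s = 3 * s" by simp
  have "q * q * q = int p ^ (3 * s)" unfolding q_def e3[symmetric] by (simp add: power_add)
  moreover have "s + 2 \<le> 3 * s" using s by simp
  ultimately have d1: "int p ^ (s + 2) dvd q * q * q" using le_imp_power_dvd by metis
  have e2: "s + s = 2 * s" by simp
  have "int p * (q * q) = int p ^ (2 * s + 1)" unfolding q_def e2[symmetric] by (simp add: power_add)
  moreover have "s + 2 \<le> 2 * s + 1" using s by simp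
  ultimately have d2: "int p ^ (s + 2) dvd int p * (q * q)" using le_imp_power_dvd by metis
  have "int p ^ (s+2) dvd (\<Sum>j<p. e (m + j * T) - e m - of_nat j * E e m)"
    using dvd_trans[OF d1 R'] by (simp add: dvd_sum)
  moreover have "int p ^ (s+2) dvd int a * (int p * E e m)"
    using dvd_trans[OF d2 mult_dvd_mono[OF dvd_refl EE]] by simp
  ultimately show ?thesis unfolding eq by simp
qed


lemma lift_step:
  assumes r: "recs c n u" and n: "n \<ge> 1" and v0: "\<forall>j<n-1. u j = 0" and v1: "u (n-1) = 1"
    and pr: "per u (int p ^ s) T" and npr: "\<not> per u (int p ^ (s+1)) T"
    and s: "s \<ge> 1" and p: "prime p" "odd p"
  shows "per u (int p ^ (s+1)) (p*T) \<and> \<not> per u (int p ^ (s+2)) (p*T)"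
proof
  have L: "\<And>m. int p ^ (s+2) dvd (u (m + p*T) - u m) - int p * (u (m+T) - u m)"
    using lift_main[OF r n v0 v1 pr s p] .
  have E: "\<And>m. int p ^ s dvd u (m+T) - u m" using pr unfolding per_def by blast
  show "per u (int p ^ (s+1)) (p*T)" unfolding per_def
  proof
    fix m
    have a: "int p * int p ^ s dvd int p * (u (m+T) - u m)" using E[of m] by (rule mult_dvd_mono[OF dvd_refl])
    hence a: "int p ^ (s+1) dvd int p * (u (m+T) - u m)" by (simp add: ac_simps)
    have "int p ^ (s+1) dvd int p ^ (s+2)" by (rule le_imp_power_dvd) simp
    hence b: "int p ^ (s+1) dvd (u (m + p*T) - u m) - int p * (u (m+T) - u m)"
      using L[of m] by (rule dvd_trans)
    have "int p ^ (s+1) dvd ((u (m + p*T) - u m) - int p * (u (m+T) - u m)) + int p * (u (m+T) - u m)"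
      using b a by (rule dvd_add)
    thus "int p ^ (s+1) dvd u (m + p*T) - u m" by simp
  qed
  show "\<not> per u (int p ^ (s+2)) (p*T)"
  proof
    assume h: "per u (int p ^ (s+2)) (p*T)"
    have "per u (int p ^ (s+1)) T" unfolding per_def
    proof
      fix m
      have "int p ^ (s+2) dvd u (m + p*T) - u m" using h unfolding per_def by blast
      hence "int p ^ (s+2) dvd (u (m + p*T) - u m) - ((u (m + p*T) - u m) - int p * (u (m+T) - u m))"
        using L[of m] by (rule dvd_diff)
      hence "int p ^ (s+2) dvd int p * (u (m+T) - u m)" by simp
      moreover have "int p ^ (s+2) = int p * int p ^ (s+1)" by simp
      ultimately have "int p * int p ^ (s+1) dvd int p * (u (m+T) - u m)" by simp
      moreover have "int p \<noteq> 0" using p by (simp add: prime_gt_0_nat)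
      ultimately show "int p ^ (s+1) dvd u (m+T) - u m" using dvd_mult_cancel_left by blast
    qed
    thus False using npr by simp
  qed
qed

lemma lrs_recs: "recs c n (lrs c n)"
  unfolding recs_def
proof
  fix m
  have "lrs c n (m + n) = (\<Sum>i<n. c i * lrs c n (m + n - n + i))"
    by (subst lrs.simps) simp
  thus "lrs c n (m + n) = (\<Sum>i<n. of_int (c i) * lrs c n (m + i))" by simp
qed

lemma lrs_init: assumes "n \<ge> 1" shows "\<forall>j<n-1. lrs c n j = 0" "lrs c n (n-1) = 1"
proof -
  show "\<forall>j<n-1. lrs c n j = 0"
  proof (intro allI impI)
    fix j assume "j < n - 1"
    thus "lrs c n j = 0" by (subst lrs.simps) simp
  qed
  show "lrs c n (n-1) = 1" using assms by (subst lrs.simps) simp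
qed

lemma coeff0_char_poly: assumes A: "A \<in> carrier_mat n n"
  shows "coeff (char_poly A) 0 = (-1) ^ n * det (A::int mat)"
proof -
  have "coeff (char_poly A) 0 = poly (char_poly A) 0" by (simp add: poly_0_coeff_0)
  also have "\<dots> = det ((-1) \<cdot>\<^sub>m A)" unfolding char_poly_def
    by (rule poly_det_cong[of _ n], insert A, auto simp: char_poly_matrix_def)
  also have "\<dots> = (-1) ^ n * det A" using A by simp
  finally show ?thesis .
qed


lemma ergodic_not_periodic:
  assumes A: "A \<in> carrier_mat n n" and n: "n \<ge> 1" and erg: "ergodic_toral A" and T: "T > 0"
    and eq: "\<forall>m. induced_lrs A (m+T) = induced_lrs A m"
  shows False
proof -
  define c where "c = (\<lambda>i. - coeff (char_poly A) i)"
  define u where "u = induced_lrs A"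
  have dA: "dim_row A = n" using A by simp
  have u_def': "u = lrs c n" unfolding u_def induced_lrs_def c_def dA ..
  define B where "B = map_mat (of_int :: int \<Rightarrow> complex) A"
  have B: "B \<in> carrier_mat n n" using A unfolding B_def by simp
  obtain as where as: "char_poly B = (\<Prod>a\<leftarrow>as. [:- a, 1:])" "length as = n"
    using char_poly_factorized[OF B] by blast
  define z where "z = hd as"
  have "z \<in> set as" using as(2) n unfolding z_def by (cases as) auto
  hence pz: "poly (char_poly B) z = 0" unfolding as(1) by (auto simp: poly_prod_list prod_list_zero_iff)
  hence ev: "eigenvalue B z" using eigenvalue_root_char_poly[OF B] by simp
  have cB: "char_poly B = map_poly of_int (char_poly A)" unfolding B_def
    by (rule of_int_hom.char_poly_hom[OF A])
  have dg: "degree (char_poly B) = n" "coeff (char_poly A) n = 1"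
    using degree_monic_char_poly[OF B] degree_monic_char_poly[OF A] by auto
  have "0 = (\<Sum>i\<le>n. coeff (char_poly B) i * z ^ i)" using pz unfolding poly_altdef dg by simp
  also have "\<dots> = (\<Sum>i<n. of_int (coeff (char_poly A) i) * z ^ i) + z ^ n"
    unfolding cB using dg(2) by (simp add: lessThan_Suc_atMost[symmetric])
  finally have zn: "z ^ n = (\<Sum>i<n. of_int (c i) * z ^ i)" unfolding c_def
    by (simp add: sum_negf eq_neg_iff_add_eq_0 add.commute)
  have rz: "recs c n (\<lambda>m. z ^ m)" unfolding recs_def
  proof
    fix m show "z ^ (m + n) = (\<Sum>i<n. of_int (c i) * z ^ (m + i))"
      using arg_cong[OF zn, of "\<lambda>x. z ^ m * x"] by (simp add: power_add sum_distrib_left ac_simps)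
  qed
  have rv: "recs c n (\<lambda>m. (of_int (u m) :: complex))"
    unfolding u_def' by (rule recs_of_int[OF lrs_recs])
  have v0: "\<forall>j<n-1. (of_int (u j) :: complex) = 0" using lrs_init(1)[OF n] unfolding u_def' by simp
  have v1: "(of_int (u (n-1)) :: complex) = 1" using lrs_init(2)[OF n] unfolding u_def' by simp
  have pv: "\<forall>m. (0::complex) dvd of_int (u (m + T)) - of_int (u m)" using eq unfolding u_def by simp
  have "(0::complex) dvd z ^ (0 + T) - z ^ 0" by (rule recs_L[OF rv n v0 v1 pv rz])
  hence "z ^ T = 1" by simp
  thus False using erg ev T unfolding ergodic_toral_def B_def by blast
qed


theorem lemma2p10:
  fixes A :: "int mat" and n p :: nat
  assumes "A \<in> carrier_mat n n" and "n \<ge> 1"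
    and "ergodic_toral A"
    and "prime p" and "odd p"
    and "coprime (int p) (det A)"
  shows "\<exists>t::nat.
           (\<forall>k\<in>{1..t}. min_period_mod (induced_lrs A) (int p ^ k) =
                        min_period_mod (induced_lrs A) (int p)) \<and>
           (\<forall>k>t. min_period_mod (induced_lrs A) (int p ^ k) =
                        p ^ (k - t) * min_period_mod (induced_lrs A) (int p))"
proof -
  note A = assms(1) and n = assms(2) and erg = assms(3) and p = assms(4,5) and cpd = assms(6)
  define c where "c = (\<lambda>i. - coeff (char_poly A) i)"
  define u where "u = induced_lrs A"
  have dA: "dim_row A = n" using A by simp
  have u_def': "u = lrs c n" unfolding u_def induced_lrs_def c_def dA ..
  have r: "recs c n u" unfolding u_def' by (rule lrs_recs)
  have v0: "\<forall>j<n-1. u j = 0" and v1: "u (n-1) = 1" using lrs_init[OF n] unfolding u_def' by auto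
  have c0: "c 0 = - ((-1) ^ n * det A)" unfolding c_def coeff0_char_poly[OF A] ..
  have "coprime (c 0) (int p)"
  proof -
    have "coprime (det A) (int p)" using cpd by (simp add: coprime_commute)
    moreover have "is_unit ((-1::int) ^ n)" by simp
    ultimately have "coprime ((-1) ^ n * det A) (int p)" by simp
    thus ?thesis unfolding c0 by simp
  qed
  hence cpk: "coprime (c 0) (int p ^ k)" for k by simp
  have pp: "p > 1" using p prime_gt_1_nat by blast
  have ex: "\<exists>T>0. per u (int p ^ k) T" for k
    by (rule per_exists[OF r n cpk]) (use pp in simp)
  note MP = min_period_props[OF ex]
  define P where "P = (\<lambda>k. min_period_mod u (int p ^ k))"
  define T1 where "T1 = P 1"
  have T1: "T1 > 0" "per u (int p) T1" using MP(1,2)[of 1] unfolding T1_def P_def by auto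
  have per_mono: "per u (int p ^ k) T \<Longrightarrow> k' \<le> k \<Longrightarrow> per u (int p ^ k') T" for k k' T
    by (erule per_dvd) (rule le_imp_power_dvd)
  have "\<exists>s. \<not> per u (int p ^ s) T1"
  proof (rule ccontr)
    assume "\<not> ?thesis"
    hence all: "\<forall>s. per u (int p ^ s) T1" by simp
    have "\<forall>m. u (m + T1) = u m"
    proof
      fix m
      define x where "x = u (m + T1) - u m"
      have d: "int p ^ nat \<bar>x\<bar> dvd x" using all unfolding per_def x_def by blast
      have "nat \<bar>x\<bar> < 2 ^ nat \<bar>x\<bar>" by (rule less_exp)
      also have "\<dots> \<le> p ^ nat \<bar>x\<bar>" using pp by (simp add: power_mono)
      finally have lt: "\<bar>x\<bar> < int p ^ nat \<bar>x\<bar>" by (metis of_nat_less_iff of_nat_power int_nat_eq abs_ge_zero)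
      have "x = 0"
      proof (rule ccontr)
        assume "x \<noteq> 0"
        hence "\<bar>int p ^ nat \<bar>x\<bar>\<bar> \<le> \<bar>x\<bar>" using dvd_imp_le_int d by blast
        thus False using lt by simp
      qed
      thus "u (m + T1) = u m" unfolding x_def by simp
    qed
    thus False using ergodic_not_periodic[OF A n erg T1(1)] unfolding u_def by blast
  qed
  then obtain s0 where s0: "\<not> per u (int p ^ s0) T1" "\<And>s. s < s0 \<Longrightarrow> per u (int p ^ s) T1"
    using exists_least_iff[of "\<lambda>s. \<not> per u (int p ^ s) T1"] by blast
  have "s0 \<noteq> 0"
  proof
    assume "s0 = 0" thus False using s0(1) unfolding per_def by simp
  qed
  moreover have "s0 \<noteq> 1" using s0 T1 by auto
  ultimately have s02: "s0 \<ge> 2" by auto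
  define t where "t = s0 - 1"
  have t1: "t \<ge> 1" "per u (int p ^ t) T1" "\<not> per u (int p ^ (t+1)) T1"
    using s02 s0 unfolding t_def by auto
  have it: "per u (int p ^ (t+j)) (p^j * T1) \<and> \<not> per u (int p ^ (t+j+1)) (p^j * T1)" for j
  proof (induction j)
    case 0 thus ?case using t1 by simp
  next
    case (Suc j)
    have "per u (int p ^ (t+j+1)) (p*(p^j*T1)) \<and> \<not> per u (int p ^ (t+j+2)) (p*(p^j*T1))"
      using lift_step[OF r n v0 v1 _ _ _ p, of "t+j" "p^j*T1"] Suc t1 by simp
    thus ?case by (simp add: ac_simps)
  qed
  have T1dvd: "T1 dvd P k" if "k \<ge> 1" for k
  proof -
    have "per u (int p ^ k) (P k)" using MP(2) unfolding P_def .
    hence "per u (int p ^ 1) (P k)" using per_mono that by blast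
    thus ?thesis using MP(4)[of 1] unfolding T1_def P_def by simp
  qed
  have Ppos: "P k > 0" for k using MP(1) unfolding P_def .
  have P1: "min_period_mod u (int p) = T1" unfolding T1_def P_def by simp
  show ?thesis
  proof (intro exI conjI ballI allI impI, fold u_def, unfold P1)
    fix k assume k: "k \<in> {1..t}"
    have "per u (int p ^ k) T1" using per_mono[OF t1(2)] k by auto
    hence "P k \<le> T1" using MP(3) T1(1) unfolding P_def by blast
    moreover have "T1 \<le> P k" using T1dvd[of k] k Ppos[of k] by (simp add: dvd_imp_le)
    ultimately show "min_period_mod u (int p ^ k) = T1" unfolding P_def by simp
  next
    fix k assume k: "t < k"
    define j where "j = k - t"
    have kj: "k = t + j" "j \<ge> 1" using k unfolding j_def by auto
    have "per u (int p ^ k) (p^j * T1)" using it[of j] kj by simp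
    hence d1: "P k dvd p^j * T1" using MP(4) unfolding P_def by blast
    obtain r where r: "P k = T1 * r" using T1dvd[of k] kj t1 by (auto elim: dvdE)
    have "T1 * r dvd T1 * p^j" using d1 r by (simp add: ac_simps)
    hence "r dvd p^j" using T1(1) by simp
    then obtain i where i: "i \<le> j" "r = p^i" using divides_primepow_nat[OF p(1)] by blast
    have "i = j"
    proof (rule ccontr)
      assume "i \<noteq> j"
      hence "i \<le> j - 1" using i by simp
      hence "p^i dvd p^(j-1)" by (rule le_imp_power_dvd)
      hence "P k dvd p^(j-1) * T1" using r i by (simp add: ac_simps)
      then obtain m0 where "p^(j-1) * T1 = P k * m0" by (rule dvdE)
      hence "p^(j-1) * T1 = m0 * P k" by (simp add: ac_simps)
      moreover have "per u (int p ^ k) (m0 * P k)" using per_mult MP(2) unfolding P_def by blast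
      ultimately have "per u (int p ^ (t + (j-1) + 1)) (p^(j-1) * T1)" using kj by simp
      thus False using it[of "j-1"] by simp
    qed
    thus "min_period_mod u (int p ^ k) = p ^ (k - t) * T1" using r i unfolding P_def j_def by simp
  qed
qed

end
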